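(* Let $(\mathfrak g,[\,,\,]_0,\rho,[\,,\,],\mathfrak B,r,\lambda)$ be a triple Lie algebra and $\{\,,\,\}_r$ the Lie–Poisson bracket $\{f,g\}_r(a^* )=\langle[df(a^* ),dg(a^* )]_r,a^*\rangle$ on $\mathfrak g^*$. Let $\mathcal H\in C^\infty(\mathfrak g^* )$ satisfy $\langle d\mathcal H(a^* ),\rho^*(x)a^*\rangle=\langle d\mathcal H(a^* ),\mathrm{ad}^*(x)a^*\rangle=0$ for all $a^*\in\mathfrak g^*$, $x\in\mathfrak g$. Let $\{e_i\}$ be a basis of $\mathfrak g$ and $\{e^i\}$ the dual basis with respect to $\mathfrak B$ ($\mathfrak B(e_i,e^j)=\delta_{ij}$), $\Omega=\sum_ie_i\otimes e^i$, and define smooth maps $L,M:\mathfrak g^*\to\mathfrak g$ by $L(a^* )=(a^*\otimes1)(\Omega)=\sum_i\langle a^*,e_i\rangle e^i$ and $M(a^* )=\tilde r(d\mathcal H(a^* ))$. Then $dL(a^* )X_{\mathcal H}(a^* )=-\rho(M(a^* ))L(a^* )$ for all $a^*\in\mathfrak g^*$, where $X_{\mathcal H}f=\{\mathcal H,f\}_r$; hence $(\mathfrak g,\rho,\mathfrak g,L,M)$ is a self-dual nonabelian generalized Lax pair for the Hamiltonian system $(\mathfrak g^*,\{\,,\,\}_r,\mathcal H)$ (with $\mathfrak a=(\mathfrak g,[\,,\,])$ and form $\mathfrak B$).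
   Context: All spaces are finite-dimensional real. A triple Lie algebra $(\mathfrak g,[\,,\,]_0,\rho,[\,,\,],\mathfrak B,r,\lambda)$ consists of: a Lie algebra $(\mathfrak g,[\,,\,]_0)$; a second Lie bracket $[\,,\,]$ on the same vector space and a representation $\rho$ of $(\mathfrak g,[\,,\,]_0)$ on $\mathfrak g$ with each $\rho(x)$ a derivation of $(\mathfrak g,[\,,\,])$ (write $x\cdot y=\rho(x)y$); a nondegenerate symmetric bilinear form $\mathfrak B$ with $\mathfrak B([x,y],z)=\mathfrak B(x,[y,z])$ and $\mathfrak B(\rho(\xi)x,y)+\mathfrak B(x,\rho(\xi)y)=0$; an element $r\in\mathfrak g\otimes\mathfrak g$, identified with $r:\mathfrak g^*\to\mathfrak g$ by $\langle r(a^* ),b^*\rangle=\langle a^*\otimes b^*,r\rangle$, and $\lambda\in\mathbb R$ such that, with $\varphi(x)=\mathfrak B(x,\cdot)$ and $\tilde r=r\varphi:\mathfrak g\to\mathfrak g$, $[x,y]_r=\tilde r(x)\cdot y-\tilde r(y)\cdot x+\lambda[x,y]$ is a Lie bracket. $df(a^* )\in\mathfrak g=\mathfrak g^{**}$; $\langle\rho^*(x)a^*,y\rangle=-\langle a^*,\rho(x)y\rangle$; $\langle\mathrm{ad}^*(x)a^*,y\rangle=-\langle a^*,[x,y]\rangle$. For a Lie algebra $\mathfrak k$ and a $\mathfrak k$-Lie algebra $(\mathfrak a,\rho)$ (a Lie algebra $\mathfrak a$ with Lie homomorphism $\rho:\mathfrak k\to\mathrm{Der}(\mathfrak a)$), a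 nonabelian generalized Lax pair for a Hamiltonian system $(P,w,\mathcal H)$ is $(\mathfrak k,\rho,\mathfrak a,L,M)$ with smooth $L:P\to\mathfrak a$, $M:P\to\mathfrak k$ and $dL(p)X_{\mathcal H}(p)=-\rho(M(p))L(p)$; it is self-dual if $\mathfrak a$ carries a nondegenerate symmetric bilinear form $\mathfrak B$ with $\mathfrak B([x,y],z)=\mathfrak B(x,[y,z])$ and $\mathfrak B(\rho(\xi)x,y)+\mathfrak B(x,\rho(\xi)y)=0$. *)

theory Defs
  imports "HOL-Analysis.Analysis"
begin

definition lie_bracket :: "('a::real_vector \<Rightarrow> 'a \<Rightarrow> 'a) \<Rightarrow> bool" where
  "lie_bracket b \<longleftrightarrow> bilinear b \<and> (\<forall>x. b x x = 0) \<and>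
     (\<forall>x y z. b x (b y z) + b y (b z x) + b z (b x y) = 0)"

definition is_derivation :: "('a::real_vector \<Rightarrow> 'a \<Rightarrow> 'a) \<Rightarrow> ('a \<Rightarrow> 'a) \<Rightarrow> bool" where
  "is_derivation b D \<longleftrightarrow> linear D \<and> (\<forall>x y. D (b x y) = b (D x) y + b x (D y))"

definition k_lie_algebra ::
  "('k::real_vector \<Rightarrow> 'k \<Rightarrow> 'k) \<Rightarrow> ('k \<Rightarrow> 'a::real_vector \<Rightarrow> 'a) \<Rightarrow> ('a \<Rightarrow> 'a \<Rightarrow> 'a) \<Rightarrow> bool" where
  "k_lie_algebra bk rho ba \<longleftrightarrow> lie_bracket bk \<and> lie_bracket ba \<and> (\<forall>x. linear (\<lambda>\<xi>. rho \<xi> x)) \<and>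
     (\<forall>\<xi>. is_derivation ba (rho \<xi>)) \<and>
     (\<forall>\<xi> \<eta> x. rho (bk \<xi> \<eta>) x = rho \<xi> (rho \<eta> x) - rho \<eta> (rho \<xi> x))"

definition invariant_form ::
  "('k \<Rightarrow> 'a::real_vector \<Rightarrow> 'a) \<Rightarrow> ('a \<Rightarrow> 'a \<Rightarrow> 'a) \<Rightarrow> ('a \<Rightarrow> 'a \<Rightarrow> real) \<Rightarrow> bool" where
  "invariant_form rho ba B \<longleftrightarrow> bilinear B \<and> (\<forall>x y. B x y = B y x) \<and>
     (\<forall>x. (\<forall>y. B x y = 0) \<longrightarrow> x = 0) \<and>
     (\<forall>x y z. B (ba x y) z = B x (ba y z)) \<and>
     (\<forall>\<xi> x y. B (rho \<xi> x) y + B x (rho \<xi> y) = 0)"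

definition phiB :: "('g::euclidean_space \<Rightarrow> 'g \<Rightarrow> real) \<Rightarrow> 'g \<Rightarrow> ('g \<Rightarrow>\<^sub>L real)" where
  "phiB B x = Blinfun (\<lambda>y. B x y)"

(* [x,y]_r = rt(x).y - rt(y).x + lambda [x,y], with rt = r \<circ> phi *)
definition r_bracket ::
  "('g::euclidean_space \<Rightarrow> 'g \<Rightarrow> 'g) \<Rightarrow> ('g \<Rightarrow> 'g \<Rightarrow> 'g) \<Rightarrow> ('g \<Rightarrow> 'g \<Rightarrow> real)
    \<Rightarrow> (('g \<Rightarrow>\<^sub>L real) \<Rightarrow> 'g) \<Rightarrow> real \<Rightarrow> 'g \<Rightarrow> 'g \<Rightarrow> 'g" where
  "r_bracket rho br B r lam x y =
     rho (r (phiB B x)) y - rho (r (phiB B y)) x + lam *\<^sub>R br x y"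

definition triple_lie_algebra ::
  "('g::euclidean_space \<Rightarrow> 'g \<Rightarrow> 'g) \<Rightarrow> ('g \<Rightarrow> 'g \<Rightarrow> 'g) \<Rightarrow> ('g \<Rightarrow> 'g \<Rightarrow> 'g)
    \<Rightarrow> ('g \<Rightarrow> 'g \<Rightarrow> real) \<Rightarrow> (('g \<Rightarrow>\<^sub>L real) \<Rightarrow> 'g) \<Rightarrow> real \<Rightarrow> bool" where
  "triple_lie_algebra br0 rho br B r lam \<longleftrightarrow>
     k_lie_algebra br0 rho br \<and> invariant_form rho br B \<and> linear r \<and>
     lie_bracket (r_bracket rho br B r lam)"

(* C^\<infinity>: all iterated Frechet derivatives exist; D k x [h1,...,hk] is the k-th
   derivative at x applied to the directions h1..hk *)
definition smooth :: "('a::real_normed_vector \<Rightarrow> 'b::real_normed_vector) \<Rightarrow> bool" where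
  "smooth f \<longleftrightarrow> (\<exists>D :: nat \<Rightarrow> 'a \<Rightarrow> 'a list \<Rightarrow> 'b.
     (\<forall>x. D 0 x [] = f x) \<and>
     (\<forall>k x vs. length vs = k \<longrightarrow>
        ((\<lambda>y. D k y vs) has_derivative (\<lambda>h. D (Suc k) x (h # vs))) (at x)))"

(* df(a), an element of g = double dual, for f on the dual of g *)
definition dgrad :: "(('g::euclidean_space \<Rightarrow>\<^sub>L real) \<Rightarrow> real) \<Rightarrow> ('g \<Rightarrow>\<^sub>L real) \<Rightarrow> 'g" where
  "dgrad f a = (THE x. (f has_derivative (\<lambda>b. blinfun_apply b x)) (at a))"

definition lie_poisson ::
  "('g::euclidean_space \<Rightarrow> 'g \<Rightarrow> 'g) \<Rightarrow> (('g \<Rightarrow>\<^sub>L real) \<Rightarrow> real) \<Rightarrow> (('g \<Rightarrow>\<^sub>L real) \<Rightarrow> real)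
     \<Rightarrow> ('g \<Rightarrow>\<^sub>L real) \<Rightarrow> real" where
  "lie_poisson b f g a = blinfun_apply a (b (dgrad f a) (dgrad g a))"

definition rho_star :: "('g::euclidean_space \<Rightarrow> 'g \<Rightarrow> 'g) \<Rightarrow> 'g \<Rightarrow> ('g \<Rightarrow>\<^sub>L real) \<Rightarrow> ('g \<Rightarrow>\<^sub>L real)" where
  "rho_star rho x a = Blinfun (\<lambda>y. - blinfun_apply a (rho x y))"

definition ad_star :: "('g::euclidean_space \<Rightarrow> 'g \<Rightarrow> 'g) \<Rightarrow> 'g \<Rightarrow> ('g \<Rightarrow>\<^sub>L real) \<Rightarrow> ('g \<Rightarrow>\<^sub>L real)" where
  "ad_star br x a = Blinfun (\<lambda>y. - blinfun_apply a (br x y))"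

definition is_ham_vf ::
  "(('p::real_normed_vector \<Rightarrow> real) \<Rightarrow> ('p \<Rightarrow> real) \<Rightarrow> 'p \<Rightarrow> real) \<Rightarrow> ('p \<Rightarrow> real) \<Rightarrow> ('p \<Rightarrow> 'p) \<Rightarrow> bool" where
  "is_ham_vf pb H X \<longleftrightarrow>
     (\<forall>f f' p. smooth f \<longrightarrow> (f has_derivative f') (at p) \<longrightarrow> f' (X p) = pb H f p)"

definition nonabelian_gen_lax_pair ::
  "('k::real_normed_vector \<Rightarrow> 'k \<Rightarrow> 'k) \<Rightarrow> ('k \<Rightarrow> 'a::real_normed_vector \<Rightarrow> 'a) \<Rightarrow> ('a \<Rightarrow> 'a \<Rightarrow> 'a)
    \<Rightarrow> ('p::real_normed_vector \<Rightarrow> 'a) \<Rightarrow> ('p \<Rightarrow> 'k)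
    \<Rightarrow> (('p \<Rightarrow> real) \<Rightarrow> ('p \<Rightarrow> real) \<Rightarrow> 'p \<Rightarrow> real) \<Rightarrow> ('p \<Rightarrow> real) \<Rightarrow> bool" where
  "nonabelian_gen_lax_pair bk rho ba L M pb H \<longleftrightarrow>
     k_lie_algebra bk rho ba \<and> smooth L \<and> smooth M \<and>
     (\<exists>X. is_ham_vf pb H X \<and>
        (\<forall>p L'. (L has_derivative L') (at p) \<longrightarrow> L' (X p) = - rho (M p) (L p)))"

definition self_dual_nonabelian_gen_lax_pair ::
  "('k::real_normed_vector \<Rightarrow> 'k \<Rightarrow> 'k) \<Rightarrow> ('k \<Rightarrow> 'a::real_normed_vector \<Rightarrow> 'a) \<Rightarrow> ('a \<Rightarrow> 'a \<Rightarrow> 'a)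
    \<Rightarrow> ('a \<Rightarrow> 'a \<Rightarrow> real)
    \<Rightarrow> ('p::real_normed_vector \<Rightarrow> 'a) \<Rightarrow> ('p \<Rightarrow> 'k)
    \<Rightarrow> (('p \<Rightarrow> real) \<Rightarrow> ('p \<Rightarrow> real) \<Rightarrow> 'p \<Rightarrow> real) \<Rightarrow> ('p \<Rightarrow> real) \<Rightarrow> bool" where
  "self_dual_nonabelian_gen_lax_pair bk rho ba B L M pb H \<longleftrightarrow>
     nonabelian_gen_lax_pair bk rho ba L M pb H \<and> invariant_form rho ba B"

end

theory Submission imports Defs begin

lemma smooth_bl:
  assumes "bounded_linear f" shows "smooth f"
  unfolding smooth_def
proof (intro exI[of _ "\<lambda>k x vs. if k = 0 then f x else if k = 1 then f (hd vs) else 0"] conjI allI impI)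
  fix k x and vs :: "'a list" assume len: "length vs = k"
  show "((\<lambda>y. (if k = 0 then f y else if k = 1 then f (hd vs) else 0)) has_derivative
     (\<lambda>h. (if Suc k = 0 then f x else if Suc k = 1 then f (hd (h # vs)) else 0))) (at x)"
  proof (cases "k = 0")
    case True then show ?thesis using bounded_linear_imp_has_derivative[OF assms] by simp
  next
    case False then show ?thesis by (simp add: has_derivative_const)
  qed
qed simp

lemma smooth_comp:
  assumes "smooth g" "bounded_linear T" shows "smooth (\<lambda>x. T (g x))"
proof -
  obtain D where D0: "\<forall>x. D 0 x [] = g x" and DS: "\<forall>k x vs. length vs = k \<longrightarrow>
        ((\<lambda>y. D k y vs) has_derivative (\<lambda>h. D (Suc k) x (h # vs))) (at x)"
    using assms(1) unfolding smooth_def by blast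
  show ?thesis unfolding smooth_def
  proof (intro exI[of _ "\<lambda>k x vs. T (D k x vs)"] conjI allI impI)
    fix k x and vs :: "'a list" assume "length vs = k"
    then show "((\<lambda>y. T (D k y vs)) has_derivative (\<lambda>h. T (D (Suc k) x (h # vs)))) (at x)"
      using bounded_linear.has_derivative[OF assms(2) DS[rule_format, of vs k x]] by simp
  qed (use D0 in simp)
qed

definition uB :: "'g::euclidean_space \<Rightarrow> ('g \<Rightarrow>\<^sub>L real)" where
  "uB j = Blinfun (\<lambda>y. y \<bullet> j)"

lemma uB_apply[simp]: "blinfun_apply (uB j) y = y \<bullet> j"
  unfolding uB_def by (simp add: bounded_linear_Blinfun_apply bounded_linear_inner_left)

lemma blinfun_expand:
  fixes b :: "'g::euclidean_space \<Rightarrow>\<^sub>L real"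
  shows "b = (\<Sum>j\<in>Basis. b j *\<^sub>R uB j)"
proof (rule blinfun_eqI)
  fix y :: 'g
  have "blinfun_apply b y = blinfun_apply b (\<Sum>j\<in>Basis. (y \<bullet> j) *\<^sub>R j)"
    by (simp add: euclidean_representation)
  also have "\<dots> = (\<Sum>j\<in>Basis. (y \<bullet> j) * b j)"
    by (simp add: blinfun.sum_right blinfun.scaleR_right)
  also have "\<dots> = blinfun_apply (\<Sum>j\<in>Basis. b j *\<^sub>R uB j) y"
    by (simp add: blinfun.sum_left blinfun.scaleR_left mult.commute)
  finally show "blinfun_apply b y = blinfun_apply (\<Sum>j\<in>Basis. b j *\<^sub>R uB j) y" .
qed

lemma deriv_repr:
  fixes f :: "('g::euclidean_space \<Rightarrow>\<^sub>L real) \<Rightarrow> real"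
  assumes "(f has_derivative f') (at p)"
  shows "f' = (\<lambda>b. blinfun_apply b (\<Sum>j\<in>Basis. f' (uB j) *\<^sub>R j))"
proof
  fix b :: "'g \<Rightarrow>\<^sub>L real"
  interpret l: bounded_linear f' using has_derivative_bounded_linear[OF assms] .
  have "f' b = f' (\<Sum>j\<in>Basis. b j *\<^sub>R uB j)" using blinfun_expand[of b] by simp
  also have "\<dots> = (\<Sum>j\<in>Basis. b j * f' (uB j))" by (simp add: l.sum l.scaleR)
  also have "\<dots> = blinfun_apply b (\<Sum>j\<in>Basis. f' (uB j) *\<^sub>R j)"
    by (simp add: blinfun.sum_right blinfun.scaleR_right mult.commute)
  finally show "f' b = blinfun_apply b (\<Sum>j\<in>Basis. f' (uB j) *\<^sub>R j)" .
qed

lemma dgrad_eq: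
  fixes f :: "('g::euclidean_space \<Rightarrow>\<^sub>L real) \<Rightarrow> real"
  assumes "(f has_derivative (\<lambda>b. blinfun_apply b x)) (at p)"
  shows "dgrad f p = x"
  unfolding dgrad_def
proof (rule the_equality)
  show "(f has_derivative (\<lambda>b. blinfun_apply b x)) (at p)" by (rule assms)
  fix x' assume "(f has_derivative (\<lambda>b. blinfun_apply b x')) (at p)"
  note eq = has_derivative_unique[OF assms this]
  have hj: "x \<bullet> j = x' \<bullet> j" for j using fun_cong[OF eq, of "uB j"] by simp
  show "x' = x" by (rule euclidean_eqI) (simp add: hj)
qed

lemma deriv_dgrad:
  fixes f :: "('g::euclidean_space \<Rightarrow>\<^sub>L real) \<Rightarrow> real"
  assumes "(f has_derivative f') (at p)"
  shows "f' = (\<lambda>b. blinfun_apply b (dgrad f p))"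
proof -
  obtain x where x: "f' = (\<lambda>b. blinfun_apply b x)" using deriv_repr[OF assms] by blast
  then have "(f has_derivative (\<lambda>b. blinfun_apply b x)) (at p)" using assms by simp
  then have "dgrad f p = x" by (rule dgrad_eq)
  then show ?thesis using x by simp
qed

lemma smooth_dgrad:
  fixes H :: "('g::euclidean_space \<Rightarrow>\<^sub>L real) \<Rightarrow> real"
  assumes "smooth H" shows "smooth (dgrad H)"
proof -
  obtain D where D0: "\<forall>x. D 0 x [] = H x" and DS: "\<forall>k x vs. length vs = k \<longrightarrow>
        ((\<lambda>y. D k y vs) has_derivative (\<lambda>h. D (Suc k) x (h # vs))) (at x)"
    using assms unfolding smooth_def by blast
  have g: "dgrad H x = (\<Sum>j\<in>Basis. D 1 x [uB j] *\<^sub>R j)" for x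
  proof -
    have d1: "(H has_derivative (\<lambda>h. D 1 x [h])) (at x)" using DS[rule_format, of "[]" 0 x] D0 by simp
    have eqf: "(\<lambda>h. D 1 x [h]) = (\<lambda>b. blinfun_apply b (\<Sum>j\<in>Basis. D 1 x [uB j] *\<^sub>R j))"
      by (rule deriv_repr[OF d1])
    have "(H has_derivative (\<lambda>b. blinfun_apply b (\<Sum>j\<in>Basis. D 1 x [uB j] *\<^sub>R j))) (at x)"
      using d1 unfolding eqf .
    then show ?thesis by (rule dgrad_eq)
  qed
  show ?thesis unfolding smooth_def
  proof (intro exI[of _ "\<lambda>k x vs. \<Sum>j\<in>Basis. D (Suc k) x (vs @ [uB j]) *\<^sub>R j"] conjI allI impI)
    fix x show "(\<Sum>j\<in>Basis. D (Suc 0) x ([] @ [uB j]) *\<^sub>R j) = dgrad H x" using g by simp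
  next
    fix k x and vs :: "('g \<Rightarrow>\<^sub>L real) list" assume "length vs = k"
    then have "\<And>j. ((\<lambda>y. D (Suc k) y (vs @ [uB j])) has_derivative (\<lambda>h. D (Suc (Suc k)) x (h # vs @ [uB j]))) (at x)"
      using DS[rule_format, of "vs @ [uB j]" for j] by simp
    note d = this
    have d2: "((\<lambda>y. D (Suc k) y (vs @ [uB j]) *\<^sub>R j) has_derivative (\<lambda>h. D (Suc (Suc k)) x (h # vs @ [uB j]) *\<^sub>R j)) (at x)" for j
      by (rule has_derivative_scaleR_left[OF d])
    show "((\<lambda>y. \<Sum>j\<in>Basis. D (Suc k) y (vs @ [uB j]) *\<^sub>R j) has_derivative
          (\<lambda>h. \<Sum>j\<in>Basis. D (Suc (Suc k)) x ((h # vs) @ [uB j]) *\<^sub>R j)) (at x)"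
      unfolding append_Cons by (rule has_derivative_sum) (rule d2)
  qed
qed

lemma basis_expand:
  fixes e e' :: "'i::finite \<Rightarrow> 'g::euclidean_space" and B :: "'g \<Rightarrow> 'g \<Rightarrow> real"
  assumes bl: "bilinear B" and inj: "inj e" and sp: "span (range e) = UNIV"
    and db: "\<forall>i j. B (e i) (e' j) = (if i = j then 1 else 0)"
  shows "y = (\<Sum>i\<in>UNIV. B y (e' i) *\<^sub>R e i)"
proof -
  have "y \<in> span (range e)" using sp by simp
  then obtain u where u: "y = (\<Sum>v\<in>range e. u v *\<^sub>R v)"
    using real_vector.span_finite[of "range e"] by auto
  have y: "y = (\<Sum>i\<in>UNIV. u (e i) *\<^sub>R e i)"
    using u by (simp add: sum.reindex[OF inj])
  have lB: "linear (\<lambda>x. B x z)" for z using bl by (simp add: bilinear_def)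
  have "B y (e' k) = u (e k)" for k
  proof -
    have "B y (e' k) = (\<Sum>i\<in>UNIV. u (e i) * B (e i) (e' k))"
      by (subst y) (simp add: linear_sum[OF lB] linear_scale[OF lB])
    also have "\<dots> = (\<Sum>i\<in>UNIV. if i = k then u (e k) else 0)"
      by (rule sum.cong) (auto simp: db[rule_format])
    also have "\<dots> = u (e k)" by simp
    finally show ?thesis .
  qed
  then show ?thesis using y by simp
qed

lemma key_identity:
  fixes e e' :: "'i::finite \<Rightarrow> 'g::euclidean_space" and B :: "'g \<Rightarrow> 'g \<Rightarrow> real"
    and R :: "'g \<Rightarrow> 'g" and a :: "'g \<Rightarrow>\<^sub>L real"
  assumes bl: "bilinear B" and sym: "\<forall>x y. B x y = B y x"
    and nd: "\<forall>x. (\<forall>y. B x y = 0) \<longrightarrow> x = 0"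
    and skew: "\<forall>x y. B (R x) y + B x (R y) = 0"
    and inj: "inj e" and sp: "span (range e) = UNIV"
    and db: "\<forall>i j. B (e i) (e' j) = (if i = j then 1 else 0)"
  shows "(\<Sum>i\<in>UNIV. a (R (e i)) *\<^sub>R e' i) = - (\<Sum>i\<in>UNIV. a (e i) *\<^sub>R R (e' i))"
proof -
  define w where "w = (\<Sum>i\<in>UNIV. a (R (e i)) *\<^sub>R e' i) + (\<Sum>i\<in>UNIV. a (e i) *\<^sub>R R (e' i))"
  have lB: "linear (\<lambda>x. B x z)" for z using bl by (simp add: bilinear_def)
  have rB: "linear (\<lambda>z. B x z)" for x using bl by (simp add: bilinear_def)
  have E: "\<And>y. y = (\<Sum>i\<in>UNIV. B y (e' i) *\<^sub>R e i)"
    by (rule basis_expand[OF bl inj sp db])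
  have wk: "B (e k) w = 0" for k
  proof -
    have "B (e k) (\<Sum>i\<in>UNIV. a (R (e i)) *\<^sub>R e' i) = (\<Sum>i\<in>UNIV. a (R (e i)) * B (e k) (e' i))"
      by (simp add: linear_sum[OF rB] linear_scale[OF rB])
    also have "\<dots> = (\<Sum>i\<in>UNIV. if i = k then a (R (e k)) else 0)"
      by (rule sum.cong) (auto simp: db[rule_format])
    finally have 1: "B (e k) (\<Sum>i\<in>UNIV. a (R (e i)) *\<^sub>R e' i) = a (R (e k))" by simp
    have "B (e k) (\<Sum>i\<in>UNIV. a (e i) *\<^sub>R R (e' i)) = (\<Sum>i\<in>UNIV. a (e i) * B (e k) (R (e' i)))"
      by (simp add: linear_sum[OF rB] linear_scale[OF rB])
    also have "\<dots> = - (\<Sum>i\<in>UNIV. B (R (e k)) (e' i) * a (e i))"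
    proof -
      have "B (e k) (R (e' i)) = - B (R (e k)) (e' i)" for i using skew[rule_format, of "e k" "e' i"] by linarith
      then show ?thesis by (simp add: sum_negf[symmetric] mult.commute)
    qed
    also have "(\<Sum>i\<in>UNIV. B (R (e k)) (e' i) * a (e i)) = a (\<Sum>i\<in>UNIV. B (R (e k)) (e' i) *\<^sub>R e i)"
      by (simp add: blinfun.sum_right blinfun.scaleR_right)
    also have "\<dots> = a (R (e k))" using E[of "R (e k)"] by simp
    finally show ?thesis unfolding w_def using 1 by (simp add: linear_add[OF rB])
  qed
  have "B y w = 0" for y
  proof -
    have "B y w = (\<Sum>i\<in>UNIV. B y (e' i) * B (e i) w)"
      by (subst E[of y]) (simp add: linear_sum[OF lB] linear_scale[OF lB])
    then show ?thesis using wk by simp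
  qed
  then have "\<forall>y. B w y = 0" using sym by simp
  then have "w = 0" using nd by blast
  then show ?thesis unfolding w_def by (simp add: add_eq_0_iff)
qed
lemma lie_anti: "lie_bracket b \<Longrightarrow> b x y = - b y x"
proof -
  assume lb: "lie_bracket b"
  then have bl: "bilinear b" and al: "\<forall>x. b x x = 0" by (auto simp: lie_bracket_def)
  have "b (x + y) (x + y) = (b x x + b y x) + (b x y + b y y)"
    by (simp only: bilinear_ladd[OF bl] bilinear_radd[OF bl])
  then have "b x y + b y x = 0" using al by (simp add: add.commute)
  then show ?thesis by (simp add: eq_neg_iff_add_eq_0)
qed

theorem theorem6p5:
  fixes br0 br :: "'g::euclidean_space \<Rightarrow> 'g \<Rightarrow> 'g"
    and rho :: "'g \<Rightarrow> 'g \<Rightarrow> 'g"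
    and B :: "'g \<Rightarrow> 'g \<Rightarrow> real"
    and r :: "('g \<Rightarrow>\<^sub>L real) \<Rightarrow> 'g"
    and lam :: real
    and H :: "('g \<Rightarrow>\<^sub>L real) \<Rightarrow> real"
    and e e' :: "'i::finite \<Rightarrow> 'g"
    and L M :: "('g \<Rightarrow>\<^sub>L real) \<Rightarrow> 'g"
  assumes tla: "triple_lie_algebra br0 rho br B r lam"
    and H_smooth: "smooth H"
    and H_rho: "\<forall>a x. blinfun_apply (rho_star rho x a) (dgrad H a) = 0"
    and H_ad: "\<forall>a x. blinfun_apply (ad_star br x a) (dgrad H a) = 0"
    and basis: "inj e" "independent (range e)" "span (range e) = UNIV"
    and dual_basis: "\<forall>i j. B (e i) (e' j) = (if i = j then 1 else 0)"
    and L_def: "\<forall>a. L a = (\<Sum>i\<in>UNIV. blinfun_apply a (e i) *\<^sub>R e' i)"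
    and M_def: "\<forall>a. M a = r (phiB B (dgrad H a))"
  shows "(\<forall>X. is_ham_vf (lie_poisson (r_bracket rho br B r lam)) H X \<longrightarrow>
            (\<forall>a L'. (L has_derivative L') (at a) \<longrightarrow> L' (X a) = - rho (M a) (L a)))
       \<and> self_dual_nonabelian_gen_lax_pair br0 rho br B L M
            (lie_poisson (r_bracket rho br B r lam)) H"
proof -
  define RB where "RB = r_bracket rho br B r lam"
  have kl: "k_lie_algebra br0 rho br" and inv: "invariant_form rho br B" and lin_r: "linear r"
    and lbr: "lie_bracket RB" using tla unfolding triple_lie_algebra_def RB_def by auto
  have lbb: "lie_bracket br" using kl by (simp add: k_lie_algebra_def)
  have blB: "bilinear B" and symB: "\<forall>x y. B x y = B y x" and ndB: "\<forall>x. (\<forall>y. B x y = 0) \<longrightarrow> x = 0"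
    and skB: "\<forall>\<xi> x y. B (rho \<xi> x) y + B x (rho \<xi> y) = 0"
    using inv by (auto simp: invariant_form_def)
  have lin_rho: "linear (rho \<xi>)" for \<xi> using kl by (simp add: k_lie_algebra_def is_derivation_def)
  have blRB: "bilinear RB" using lbr by (simp add: lie_bracket_def)
  have blbr: "bilinear br" using lbb by (simp add: lie_bracket_def)
  have phi_apply: "blinfun_apply (phiB B x) = B x" for x
    unfolding phiB_def
    by (rule bounded_linear_Blinfun_apply) (use blB in \<open>simp add: bilinear_def linear_conv_bounded_linear[symmetric]\<close>)
  have lin_phi: "linear (phiB B)"
  proof (rule linearI)
    fix x y :: 'g and c :: real
    show "phiB B (x + y) = phiB B x + phiB B y"
      by (rule blinfun_eqI) (simp add: phi_apply blinfun.add_left bilinear_ladd[OF blB])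
    show "phiB B (c *\<^sub>R x) = c *\<^sub>R phiB B x"
      by (rule blinfun_eqI) (simp add: phi_apply blinfun.scaleR_left bilinear_lmul[OF blB])
  qed
  have blT: "bounded_linear (\<lambda>x. r (phiB B x))"
    using linear_compose[OF lin_phi lin_r] by (simp add: o_def linear_conv_bounded_linear)
  have blL: "bounded_linear L"
  proof -
    have "bounded_linear (\<lambda>a. \<Sum>i\<in>UNIV. blinfun_apply a (e i) *\<^sub>R e' i)"
      by (intro bounded_linear_sum bounded_linear_compose[OF bounded_linear_scaleR_left]
          bounded_bilinear.bounded_linear_left[OF bounded_bilinear_blinfun_apply])
    moreover have "L = (\<lambda>a. \<Sum>i\<in>UNIV. blinfun_apply a (e i) *\<^sub>R e' i)" using L_def by auto
    ultimately show ?thesis by simp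
  qed
  have smL: "smooth L" by (rule smooth_bl[OF blL])
  have smM: "smooth M"
  proof -
    have "M = (\<lambda>a. r (phiB B (dgrad H a)))" using M_def by auto
    then show ?thesis using smooth_comp[OF smooth_dgrad[OF H_smooth] blT] by simp
  qed
  have blf: "bounded_linear (\<lambda>b::'g \<Rightarrow>\<^sub>L real. blinfun_apply b v)" for v
    by (rule bounded_bilinear.bounded_linear_left[OF bounded_bilinear_blinfun_apply])
  have Xval: "blinfun_apply (X p) v = blinfun_apply p (RB (dgrad H p) v)"
    if hX: "is_ham_vf (lie_poisson RB) H X" for X p v
  proof -
    have d: "((\<lambda>b. blinfun_apply b v) has_derivative (\<lambda>b. blinfun_apply b v)) (at p)"
      by (rule bounded_linear_imp_has_derivative[OF blf])
    have "dgrad (\<lambda>b. blinfun_apply b v) p = v" by (rule dgrad_eq[OF d])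
    moreover have "blinfun_apply (X p) v = lie_poisson RB H (\<lambda>b. blinfun_apply b v) p"
      using hX[unfolded is_ham_vf_def, rule_format, OF smooth_bl[OF blf] d] .
    ultimately show ?thesis unfolding lie_poisson_def by simp
  qed
  have main: "L' (X a) = - rho (M a) (L a)"
    if hX: "is_ham_vf (lie_poisson RB) H X" and dL: "(L has_derivative L') (at a)" for X a L'
  proof -
    have "L' = L" using has_derivative_unique[OF dL bounded_linear_imp_has_derivative[OF blL]] .
    define h where "h = dgrad H a"
    define T where "T = (\<lambda>x. r (phiB B x))"
    have MT: "M a = T h" using M_def unfolding T_def h_def by simp
    have z1: "blinfun_apply a (rho x h) = 0" for x
    proof -
      have "bounded_linear (\<lambda>y. - blinfun_apply a (rho x y))"
        using lin_rho[of x] by (intro bounded_linear_minus bounded_linear_blinfun_apply)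
          (simp add: linear_conv_bounded_linear[symmetric])
      then show ?thesis using H_rho[rule_format, where a=a and x=x]
        unfolding rho_star_def h_def by (simp add: bounded_linear_Blinfun_apply)
    qed
    have z2: "blinfun_apply a (br x h) = 0" for x
    proof -
      have "bounded_linear (\<lambda>y. - blinfun_apply a (br x y))"
        using blbr by (intro bounded_linear_minus bounded_linear_blinfun_apply)
          (simp add: bilinear_def linear_conv_bounded_linear[symmetric])
      then show ?thesis using H_ad[rule_format, where a=a and x=x]
        unfolding ad_star_def h_def by (simp add: bounded_linear_Blinfun_apply)
    qed
    have comp: "blinfun_apply a (RB h v) = blinfun_apply a (rho (T h) v)" for v
    proof -
      have "RB h v = rho (T h) v - rho (T v) h + lam *\<^sub>R br h v"
        unfolding RB_def r_bracket_def T_def ..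
      moreover have "br h v = - br v h" by (rule lie_anti[OF lbb])
      ultimately show ?thesis using z1 z2
        by (simp add: blinfun.diff_right blinfun.add_right blinfun.scaleR_right blinfun.minus_right)
    qed
    have "L' (X a) = (\<Sum>i\<in>UNIV. blinfun_apply a (rho (T h) (e i)) *\<^sub>R e' i)"
      using \<open>L' = L\<close> L_def Xval[OF hX] comp unfolding h_def by simp
    also have "\<dots> = - (\<Sum>i\<in>UNIV. blinfun_apply a (e i) *\<^sub>R rho (T h) (e' i))"
      by (rule key_identity[OF blB symB ndB _ basis(1) basis(3) dual_basis]) (use skB in blast)
    also have "\<dots> = - rho (T h) (L a)"
      using L_def by (simp add: linear_sum[OF lin_rho] linear_scale[OF lin_rho])
    finally show ?thesis using MT by simp
  qed
  define Xc where "Xc = (\<lambda>p. Blinfun (\<lambda>v. blinfun_apply p (RB (dgrad H p) v)))"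
  have hXc: "is_ham_vf (lie_poisson RB) H Xc"
    unfolding is_ham_vf_def
  proof (intro allI impI)
    fix f f' p assume "smooth (f :: ('g \<Rightarrow>\<^sub>L real) \<Rightarrow> real)" and df: "(f has_derivative f') (at p)"
    have bl: "bounded_linear (\<lambda>v. blinfun_apply p (RB (dgrad H p) v))"
      using blRB by (intro bounded_linear_blinfun_apply)
        (simp add: bilinear_def linear_conv_bounded_linear[symmetric])
    show "f' (Xc p) = lie_poisson RB H f p"
      unfolding deriv_dgrad[OF df] Xc_def lie_poisson_def
      by (simp add: bounded_linear_Blinfun_apply[OF bl])
  qed
  show ?thesis
    unfolding RB_def[symmetric] self_dual_nonabelian_gen_lax_pair_def nonabelian_gen_lax_pair_def
  proof (intro conjI allI impI)
    show "\<exists>X. is_ham_vf (lie_poisson RB) H X \<and>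
        (\<forall>p L'. (L has_derivative L') (at p) \<longrightarrow> L' (X p) = - rho (M p) (L p))"
      using main hXc by blast
  qed (use main kl inv smL smM in auto)
qed
end
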